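(* Let $\mathcal C$ be a convex arc with total curvature $\int_{\mathcal C}\kappa\,ds\le\pi$ whose radius of curvature satisfies $R_1\le\rho\le R_2$ at every point, for constants $0<R_1\le R_2$. Let $\mathcal L$ be a lattice in $\mathbb R^2$, let $L=\mathrm{Length}(\mathcal C)$, and let $\delta>0$ satisfy $$\delta<\frac{d_{\mathcal L}^2}{2\left(R_2+d_{\mathcal L}+\sqrt{(R_2+d_{\mathcal L})^2-d_{\mathcal L}^2}\right)}\quad\text{and}\quad \frac{A_{\mathcal L}}{2}-L\delta-\frac32\delta^2>0.$$ Then $$\#\{Q\in\mathcal L:\mathrm{dist}(\mathcal C,Q)<\delta\}<2+\frac{L}{\big(R_1(A_{\mathcal L}-2L\delta-3\delta^2)\big)^{1/3}}.$$
   Context: A lattice is a set $\mathcal L=\mathcal L(v_0,v_1,v_2)=\{v_0+mv_1+nv_2: m,n\in\mathbb Z\}$ where $v_0,v_1,v_2\in\mathbb R^2$ and $v_1,v_2$ are linearly independent; $A_{\mathcal L}=|\det(v_1,v_2)|$ and $d_{\mathcal L}=\min\{\|P-Q\|:P,Q\in\mathcal L,\ P\ne Q\}$. All curves are of class $C^2$ with nonvanishing first and second derivative vectors, oriented so that the curvature $\kappa$ is positive; a convex arc is such a non-closed curve lying on the boundary of a convex planar region. $\rho=1/\kappa$ is the radius of curvature, $s$ is arclength, and $\mathrm{dist}(\mathcal C,Q)$ is the Euclidean distance from $Q$ to the set $\mathcal C$. *)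

theory Defs
  imports "HOL-Analysis.Analysis"
begin

definition det2 :: "real^2 \<Rightarrow> real^2 \<Rightarrow> real" where
  "det2 u v = u$1 * v$2 - u$2 * v$1"

definition lattice :: "real^2 \<Rightarrow> real^2 \<Rightarrow> real^2 \<Rightarrow> (real^2) set" where
  "lattice v0 v1 v2 = {v0 + of_int m *\<^sub>R v1 + of_int n *\<^sub>R v2 | m n. True}"

definition lattice_area :: "real^2 \<Rightarrow> real^2 \<Rightarrow> real" where
  "lattice_area v1 v2 = \<bar>det2 v1 v2\<bar>"

definition lattice_mindist :: "(real^2) set \<Rightarrow> real" where
  "lattice_mindist L = Inf {dist P Q | P Q. P \<in> L \<and> Q \<in> L \<and> P \<noteq> Q}"

definition C2_regular_curve ::
  "(real \<Rightarrow> real^2) \<Rightarrow> (real \<Rightarrow> real^2) \<Rightarrow> (real \<Rightarrow> real^2) \<Rightarrow> real \<Rightarrow> real \<Rightarrow> bool" where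
  "C2_regular_curve g g1 g2 a b \<longleftrightarrow> a < b \<and>
     (\<forall>t\<in>{a..b}. (g has_vector_derivative g1 t) (at t within {a..b})) \<and>
     (\<forall>t\<in>{a..b}. (g1 has_vector_derivative g2 t) (at t within {a..b})) \<and>
     continuous_on {a..b} g2 \<and>
     (\<forall>t\<in>{a..b}. g1 t \<noteq> 0 \<and> g2 t \<noteq> 0)"

definition curvature :: "(real \<Rightarrow> real^2) \<Rightarrow> (real \<Rightarrow> real^2) \<Rightarrow> real \<Rightarrow> real" where
  "curvature g1 g2 t = det2 (g1 t) (g2 t) / norm (g1 t) ^ 3"

definition convex_arc :: "(real \<Rightarrow> real^2) \<Rightarrow> real \<Rightarrow> real \<Rightarrow> bool" where
  "convex_arc g a b \<longleftrightarrow> inj_on g {a..b} \<and>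
     (\<exists>K::(real^2) set. convex K \<and> interior K \<noteq> {} \<and> g ` {a..b} \<subseteq> frontier K)"

definition arc_length :: "(real \<Rightarrow> real^2) \<Rightarrow> real \<Rightarrow> real \<Rightarrow> real" where
  "arc_length g1 a b = integral {a..b} (\<lambda>t. norm (g1 t))"

definition total_curvature ::
  "(real \<Rightarrow> real^2) \<Rightarrow> (real \<Rightarrow> real^2) \<Rightarrow> real \<Rightarrow> real \<Rightarrow> real" where
  "total_curvature g1 g2 a b = integral {a..b} (\<lambda>t. curvature g1 g2 t * norm (g1 t))"

end

theory Submission
  imports Defs
begin

lemma norm2: "norm (x::real^2) = sqrt ((x$1)\<^sup>2 + (x$2)\<^sup>2)"
  unfolding norm_vec_def L2_set_def by (simp add: sum_2)

lemma infdist_lessE: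
  assumes "A \<noteq> {}" "infdist x A < d"
  obtains y where "y \<in> A" "dist x y < d"
proof -
  have lt: "(INF a\<in>A. dist x a) < d" using assms(2) unfolding infdist_notempty[OF assms(1)] .
  have bd: "bdd_below (dist x ` A)" by (rule bdd_belowI[of _ 0]) auto
  have "\<exists>y\<in>A. dist x y < d" using cINF_less_iff[OF assms(1) bd, of d] lt by blast
  then obtain y where "y \<in> A" "dist x y < d" by blast
  thus ?thesis using that by blast
qed

lemma det2_bound: "\<bar>det2 x y\<bar> \<le> norm x * norm y"
proof -
  have "(det2 x y)\<^sup>2 \<le> ((x$1)\<^sup>2 + (x$2)\<^sup>2) * ((y$1)\<^sup>2 + (y$2)\<^sup>2)"
  proof -
    have "((x$1)\<^sup>2 + (x$2)\<^sup>2) * ((y$1)\<^sup>2 + (y$2)\<^sup>2) = (det2 x y)\<^sup>2 + (x$1*y$1 + x$2*y$2)\<^sup>2"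
      unfolding det2_def by (simp add: power2_eq_square algebra_simps)
    thus ?thesis by simp
  qed
  hence "sqrt ((det2 x y)\<^sup>2) \<le> sqrt (((x$1)\<^sup>2 + (x$2)\<^sup>2) * ((y$1)\<^sup>2 + (y$2)\<^sup>2))" 
    using real_sqrt_le_mono by blast
  thus ?thesis by (simp add: norm2 real_sqrt_mult)
qed

lemma mono_deriv:
  fixes f f' :: "real \<Rightarrow> real"
  assumes "s \<le> t" "{s..t} \<subseteq> S"
    and "\<And>x. x \<in> {s..t} \<Longrightarrow> (f has_real_derivative f' x) (at x within S)"
    and "\<And>x. x \<in> {s..t} \<Longrightarrow> f' x \<ge> 0"
  shows "f s \<le> f t"
proof -
  have "\<And>x. s \<le> x \<Longrightarrow> x \<le> t \<Longrightarrow> (f has_derivative (\<lambda>h. f' x * h)) (at x within {s..t})"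
  proof -
    fix x assume "s \<le> x" "x \<le> t"
    hence "(f has_real_derivative f' x) (at x within {s..t})"
      using assms(2) \<open>s \<le> x\<close> \<open>x \<le> t\<close> by (intro DERIV_subset[OF assms(3)]) auto
    thus "(f has_derivative (\<lambda>h. f' x * h)) (at x within {s..t})"
      by (simp add: has_field_derivative_def)
  qed
  from mvt_very_simple[OF assms(1) this] obtain x where "x \<in> {s..t}" "f t - f s = f' x * (t - s)" by blast
  moreover have "f' x * (t - s) \<ge> 0" using assms(1,4) calculation(1) by simp
  ultimately show ?thesis by simp
qed


locale ccurve =
  fixes g g1 g2 :: "real \<Rightarrow> real^2" and a b R1 R2 :: real
  assumes curve: "C2_regular_curve g g1 g2 a b"
    and pos_curv: "\<forall>t\<in>{a..b}. curvature g1 g2 t > 0"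
    and totcurv: "total_curvature g1 g2 a b \<le> pi"
    and R: "0 < R1" "R1 \<le> R2"
    and rho: "\<forall>t\<in>{a..b}. R1 \<le> 1 / curvature g1 g2 t \<and> 1 / curvature g1 g2 t \<le> R2"
begin

definition "X t = g t $ 1"
definition "Y t = g t $ 2"
definition "X1 t = g1 t $ 1"
definition "Y1 t = g1 t $ 2"
definition "X2 t = g2 t $ 1"
definition "Y2 t = g2 t $ 2"
definition "v t = norm (g1 t)"
definition "w t = (X1 t * Y2 t - Y1 t * X2 t) / (v t)\<^sup>2"

lemma ab: "a < b" using curve unfolding C2_regular_curve_def by simp
lemma gd: "t \<in> {a..b} \<Longrightarrow> (g has_vector_derivative g1 t) (at t within {a..b})"
  using curve unfolding C2_regular_curve_def by simp
lemma g1d: "t \<in> {a..b} \<Longrightarrow> (g1 has_vector_derivative g2 t) (at t within {a..b})"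
  using curve unfolding C2_regular_curve_def by simp
lemma g2c: "continuous_on {a..b} g2"
  using curve unfolding C2_regular_curve_def by simp
lemma g1nz: "t \<in> {a..b} \<Longrightarrow> g1 t \<noteq> 0"
  using curve unfolding C2_regular_curve_def by simp

lemma gc: "continuous_on {a..b} g"
  using gd has_vector_derivative_continuous continuous_on_eq_continuous_within by blast
lemma g1c: "continuous_on {a..b} g1"
  using g1d has_vector_derivative_continuous continuous_on_eq_continuous_within by blast

lemma comp_d:
  assumes "(f has_vector_derivative f') (at t within S)"
  shows "((\<lambda>t. f t $ i) has_real_derivative (f' $ i)) (at t within S)"
  unfolding has_real_derivative_iff_has_vector_derivative
  using bounded_linear.has_vector_derivative[OF bounded_linear_vec_nth assms] by simp

lemma Xd: "t \<in> {a..b} \<Longrightarrow> (X has_real_derivative X1 t) (at t within {a..b})"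
  unfolding X_def[abs_def] X1_def by (rule comp_d[OF gd])
lemma Yd: "t \<in> {a..b} \<Longrightarrow> (Y has_real_derivative Y1 t) (at t within {a..b})"
  unfolding Y_def[abs_def] Y1_def by (rule comp_d[OF gd])
lemma X1d: "t \<in> {a..b} \<Longrightarrow> (X1 has_real_derivative X2 t) (at t within {a..b})"
  unfolding X1_def[abs_def] X2_def by (rule comp_d[OF g1d])
lemma Y1d: "t \<in> {a..b} \<Longrightarrow> (Y1 has_real_derivative Y2 t) (at t within {a..b})"
  unfolding Y1_def[abs_def] Y2_def by (rule comp_d[OF g1d])

lemma comp_c: "continuous_on S f \<Longrightarrow> continuous_on S (\<lambda>t. f t $ i)"
  by (intro continuous_intros) 

lemma X1c: "continuous_on {a..b} X1" unfolding X1_def[abs_def] by (rule comp_c[OF g1c])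
lemma Y1c: "continuous_on {a..b} Y1" unfolding Y1_def[abs_def] by (rule comp_c[OF g1c])
lemma X2c: "continuous_on {a..b} X2" unfolding X2_def[abs_def] by (rule comp_c[OF g2c])
lemma Y2c: "continuous_on {a..b} Y2" unfolding Y2_def[abs_def] by (rule comp_c[OF g2c])

lemma v_eq: "v t = sqrt ((X1 t)\<^sup>2 + (Y1 t)\<^sup>2)"
  unfolding v_def X1_def Y1_def by (rule norm2)
lemma v_pos: "t \<in> {a..b} \<Longrightarrow> v t > 0"
  unfolding v_def using g1nz by simp
lemma v_sq: "(v t)\<^sup>2 = (X1 t)\<^sup>2 + (Y1 t)\<^sup>2"
  unfolding v_eq by simp
lemma vc: "continuous_on {a..b} v"
  unfolding v_def[abs_def] by (intro continuous_intros g1c)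
lemma wc: "continuous_on {a..b} w"
proof -
  have "\<forall>t\<in>{a..b}. (v t)\<^sup>2 \<noteq> 0" using v_pos by fastforce
  thus ?thesis unfolding w_def[abs_def] by (intro continuous_intros X1c Y1c X2c Y2c vc) auto
qed

lemma det_eq: "det2 (g1 t) (g2 t) = X1 t * Y2 t - Y1 t * X2 t"
  unfolding det2_def X1_def Y1_def X2_def Y2_def by simp

lemma curv_eq: "t \<in> {a..b} \<Longrightarrow> curvature g1 g2 t = w t / v t"
  using v_pos[of t] unfolding curvature_def det_eq w_def v_def[symmetric]
  by (simp add: power2_eq_square power3_eq_cube)

lemma w_bounds: assumes "t \<in> {a..b}"
  shows "v t / R2 \<le> w t" "w t \<le> v t / R1" "w t > 0"
proof -
  define k where "k = curvature g1 g2 t"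
  have k: "k > 0" "R1 \<le> 1/k" "1/k \<le> R2" using pos_curv rho assms unfolding k_def by auto
  have vp: "v t > 0" using v_pos assms by simp
  have wk: "w t = k * v t" using curv_eq[OF assms] vp unfolding k_def by simp
  have "k \<le> 1/R1" using k R by (simp add: field_simps)
  hence "k * v t \<le> (1/R1) * v t" using vp by (intro mult_right_mono) auto
  thus "w t \<le> v t / R1" using wk by simp
  have "1/R2 \<le> k" using k R by (simp add: field_simps)
  hence "(1/R2) * v t \<le> k * v t" using vp by (intro mult_right_mono) auto
  thus "v t / R2 \<le> w t" using wk by simp
  show "w t > 0" using wk k vp by simp
qed

end

lemma d_sin: "(f has_real_derivative D) (at x within S) \<Longrightarrow> ((\<lambda>x. sin (f x)) has_real_derivative cos (f x) * D) (at x within S)"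
  by (auto intro!: derivative_eq_intros)
lemma d_cos: "(f has_real_derivative D) (at x within S) \<Longrightarrow> ((\<lambda>x. cos (f x)) has_real_derivative - sin (f x) * D) (at x within S)"
  by (auto intro!: derivative_eq_intros)


context ccurve begin

definition "sig t = integral {a..t} v"
definition "phi t = integral {a..t} w"
definition "alpha = (SOME al. cos al = X1 a / v a \<and> sin al = Y1 a / v a)"
definition "Th t = alpha + phi t"

lemma sigd: "t \<in> {a..b} \<Longrightarrow> (sig has_real_derivative v t) (at t within {a..b})"
  unfolding sig_def[abs_def] has_real_derivative_iff_has_vector_derivative
  by (rule integral_has_vector_derivative[OF vc])
lemma phid: "t \<in> {a..b} \<Longrightarrow> (phi has_real_derivative w t) (at t within {a..b})"
  unfolding phi_def[abs_def] has_real_derivative_iff_has_vector_derivative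
  by (rule integral_has_vector_derivative[OF wc])
lemma Thd: "t \<in> {a..b} \<Longrightarrow> (Th has_real_derivative w t) (at t within {a..b})"
  unfolding Th_def[abs_def] by (auto intro!: derivative_eq_intros phid)

lemma sig_a: "sig a = 0" unfolding sig_def by simp
lemma phi_a: "phi a = 0" unfolding phi_def by simp
lemma arc_eq: "arc_length g1 a b = sig b" unfolding arc_length_def sig_def v_def ..
lemma tot_eq: "total_curvature g1 g2 a b = phi b"
  unfolding total_curvature_def phi_def
proof (rule integral_cong)
  fix x assume x: "x \<in> {a..b}"
  show "curvature g1 g2 x * norm (g1 x) = w x"
    using curv_eq[OF x] v_pos[OF x] unfolding v_def[symmetric] by simp
qed

lemma alpha: "cos alpha = X1 a / v a" "sin alpha = Y1 a / v a"
proof -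
  have "a \<in> {a..b}" using ab by simp
  hence "(X1 a / v a)\<^sup>2 + (Y1 a / v a)\<^sup>2 = ((X1 a)\<^sup>2 + (Y1 a)\<^sup>2) / (v a)\<^sup>2"
    by (simp add: power_divide add_divide_distrib)
  also have "\<dots> = (v a)\<^sup>2 / (v a)\<^sup>2" by (simp only: v_sq)
  also have "\<dots> = 1" using v_pos[of a] \<open>a \<in> {a..b}\<close> by simp
  finally have "(X1 a / v a)\<^sup>2 + (Y1 a / v a)\<^sup>2 = 1" .
  then obtain al where "X1 a / v a = cos al" "Y1 a / v a = sin al" by (rule sincos_total_2pi)
  hence "\<exists>al. cos al = X1 a / v a \<and> sin al = Y1 a / v a" by metis
  from someI_ex[OF this] show "cos alpha = X1 a / v a" "sin alpha = Y1 a / v a"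
    unfolding alpha_def by auto
qed

lemma vd: assumes "t \<in> {a..b}"
  shows "(v has_real_derivative (X1 t * X2 t + Y1 t * Y2 t) / v t) (at t within {a..b})"
proof -
  have v_fun: "v = (\<lambda>t. sqrt ((X1 t)\<^sup>2 + (Y1 t)\<^sup>2))" using v_eq by auto
  have pos: "(X1 t)\<^sup>2 + (Y1 t)\<^sup>2 > 0" using v_pos[OF assms] v_sq[of t] by (metis zero_less_power)
  have sp: "sqrt ((X1 t)\<^sup>2 + (Y1 t)\<^sup>2) > 0" using pos by simp
  show ?thesis unfolding v_fun using pos sp
    by (auto intro!: derivative_eq_intros X1d Y1d assms simp: power2_eq_square) (simp add: field_simps)
qed


lemma Ud: assumes t: "t \<in> {a..b}"
  shows "((\<lambda>t. (X1 t * cos (Th t) + Y1 t * sin (Th t)) / v t) has_real_derivative 0) (at t within {a..b})"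
proof -
  let ?F = "at t within {a..b}"
  define c where "c = cos (Th t)"
  define s where "s = sin (Th t)"
  have vp: "v t > 0" using v_pos[OF t] .
  have z1: "((\<lambda>t. X1 t * cos (Th t)) has_real_derivative (X2 t * c + (- s * w t) * X1 t)) ?F"
    unfolding c_def s_def by (rule DERIV_mult[OF X1d[OF t] d_cos[OF Thd[OF t]]])
  have z2: "((\<lambda>t. Y1 t * sin (Th t)) has_real_derivative (Y2 t * s + (c * w t) * Y1 t)) ?F"
    unfolding c_def s_def by (rule DERIV_mult[OF Y1d[OF t] d_sin[OF Thd[OF t]]])
  have z: "((\<lambda>t. X1 t * cos (Th t) + Y1 t * sin (Th t)) has_real_derivative
      (X2 t * c + (- s * w t) * X1 t) + (Y2 t * s + (c * w t) * Y1 t)) ?F"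
    by (rule DERIV_add[OF z1 z2])
  have q: "((\<lambda>t. (X1 t * cos (Th t) + Y1 t * sin (Th t)) / v t) has_real_derivative
      (((X2 t * c + (- s * w t) * X1 t) + (Y2 t * s + (c * w t) * Y1 t)) * v t
        - (X1 t * c + Y1 t * s) * ((X1 t * X2 t + Y1 t * Y2 t) / v t)) / (v t * v t)) ?F"
    using DERIV_divide[OF z vd[OF t]] vp unfolding c_def s_def by simp
  have wv: "w t * (v t)\<^sup>2 = X1 t * Y2 t - Y1 t * X2 t" unfolding w_def using vp by simp
  have key: "(X2 t * c + Y2 t * s) * ((X1 t)\<^sup>2 + (Y1 t)\<^sup>2) + (Y1 t * c - X1 t * s) * (X1 t * Y2 t - Y1 t * X2 t)
      - (X1 t * c + Y1 t * s) * (X1 t * X2 t + Y1 t * Y2 t) = 0"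
    by (simp add: algebra_simps power2_eq_square)
  have num: "((X2 t * c + (- s * w t) * X1 t) + (Y2 t * s + (c * w t) * Y1 t)) * v t
        - (X1 t * c + Y1 t * s) * ((X1 t * X2 t + Y1 t * Y2 t) / v t)
      = ((X2 t * c + Y2 t * s) * (v t)\<^sup>2 + (Y1 t * c - X1 t * s) * (w t * (v t)\<^sup>2)
         - (X1 t * c + Y1 t * s) * (X1 t * X2 t + Y1 t * Y2 t)) / v t"
    using vp by (simp add: field_simps power2_eq_square)
  also have "\<dots> = 0" unfolding wv unfolding v_sq using key by simp
  finally show ?thesis using q by simp
qed

lemma U_one: assumes t: "t \<in> {a..b}"
  shows "(X1 t * cos (Th t) + Y1 t * sin (Th t)) / v t = 1"
proof -
  define U where "U = (\<lambda>t. (X1 t * cos (Th t) + Y1 t * sin (Th t)) / v t)"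
  have a: "a \<in> {a..b}" using ab by simp
  have Ua: "U a = 1"
  proof -
    have "Th a = alpha" unfolding Th_def phi_a by simp
    hence "U a = (X1 a * (X1 a / v a) + Y1 a * (Y1 a / v a)) / v a" unfolding U_def by (simp add: alpha)
    also have "\<dots> = ((X1 a)\<^sup>2 + (Y1 a)\<^sup>2) / (v a)\<^sup>2" using v_pos[OF a] by (simp add: field_simps power2_eq_square)
    also have "\<dots> = 1" unfolding v_sq[symmetric] using v_pos[OF a] by simp
    finally show ?thesis .
  qed
  have d: "\<And>x. x \<in> {a..t} \<Longrightarrow> (U has_real_derivative 0) (at x within {a..b})"
    unfolding U_def using t by (intro Ud) auto
  have d2: "\<And>x. x \<in> {a..t} \<Longrightarrow> ((\<lambda>x. - U x) has_real_derivative - 0) (at x within {a..b})"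
    using d by (intro DERIV_minus)
  have "U a \<le> U t" using t by (intro mono_deriv[OF _ _ d]) auto
  moreover have "- U a \<le> - U t" using t by (intro mono_deriv[OF _ _ d2]) auto
  ultimately show ?thesis using Ua unfolding U_def by simp
qed

lemma tangent: assumes t: "t \<in> {a..b}"
  shows "X1 t = v t * cos (Th t)" "Y1 t = v t * sin (Th t)"
proof -
  define c where "c = cos (Th t)"
  define s where "s = sin (Th t)"
  have cs: "c\<^sup>2 + s\<^sup>2 = 1" unfolding c_def s_def by simp
  have vp: "v t > 0" using v_pos[OF t] .
  have Z: "X1 t * c + Y1 t * s = v t" using U_one[OF t] vp unfolding c_def s_def by (simp add: field_simps)
  have "(X1 t * c + Y1 t * s)\<^sup>2 + (Y1 t * c - X1 t * s)\<^sup>2 = ((X1 t)\<^sup>2 + (Y1 t)\<^sup>2) * (c\<^sup>2 + s\<^sup>2)"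
    by (simp add: algebra_simps power2_eq_square)
  hence "(v t)\<^sup>2 + (Y1 t * c - X1 t * s)\<^sup>2 = (v t)\<^sup>2" unfolding Z cs v_sq by simp
  hence q: "Y1 t * c - X1 t * s = 0" by simp
  have "(X1 t * c + Y1 t * s) * c - (Y1 t * c - X1 t * s) * s = X1 t * (c\<^sup>2 + s\<^sup>2)"
    by (simp add: algebra_simps power2_eq_square)
  hence "X1 t = (X1 t * c + Y1 t * s) * c - (Y1 t * c - X1 t * s) * s" unfolding cs by simp
  hence "X1 t = v t * c" unfolding Z q by simp
  thus "X1 t = v t * cos (Th t)" unfolding c_def .
  have "(X1 t * c + Y1 t * s) * s + (Y1 t * c - X1 t * s) * c = Y1 t * (c\<^sup>2 + s\<^sup>2)"
    by (simp add: algebra_simps power2_eq_square)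
  hence "Y1 t = (X1 t * c + Y1 t * s) * s + (Y1 t * c - X1 t * s) * c" unfolding cs by simp
  hence "Y1 t = v t * s" unfolding Z q by simp
  thus "Y1 t = v t * sin (Th t)" unfolding s_def .
qed

lemma Th_mono: assumes "s \<le> t" "{s..t} \<subseteq> {a..b}" shows "Th s \<le> Th t"
proof (rule mono_deriv[OF assms, of Th w])
  fix x assume "x \<in> {s..t}" hence x: "x \<in> {a..b}" using assms by auto
  show "(Th has_real_derivative w x) (at x within {a..b})" by (rule Thd[OF x])
  show "0 \<le> w x" using w_bounds(3)[OF x] by simp
qed

lemma sig_mono: assumes "s \<le> t" "{s..t} \<subseteq> {a..b}" shows "sig s \<le> sig t"
proof (rule mono_deriv[OF assms, of sig v])
  fix x assume "x \<in> {s..t}" hence x: "x \<in> {a..b}" using assms by auto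
  show "(sig has_real_derivative v x) (at x within {a..b})" by (rule sigd[OF x])
  show "0 \<le> v x" using v_pos[OF x] by simp
qed

lemma Th_total: "Th b - Th a \<le> pi"
  using totcurv unfolding tot_eq Th_def phi_a by simp

lemma Th_sig: assumes "s \<le> t" "{s..t} \<subseteq> {a..b}"
  shows "Th t - Th s \<le> (sig t - sig s) / R1"
proof -
  have "(\<lambda>x. sig x / R1 - Th x) s \<le> (\<lambda>x. sig x / R1 - Th x) t"
  proof (rule mono_deriv[OF assms, of _ "\<lambda>x. v x / R1 - w x"])
    fix x assume "x \<in> {s..t}"
    hence x: "x \<in> {a..b}" using assms by auto
    show "((\<lambda>x. sig x / R1 - Th x) has_real_derivative v x / R1 - w x) (at x within {a..b})"
      by (intro DERIV_diff DERIV_cdivide sigd Thd x)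
    show "0 \<le> v x / R1 - w x" using w_bounds(2)[OF x] by simp
  qed
  thus ?thesis by (simp add: diff_divide_distrib)
qed

end

lemma anti_deriv:
  fixes f f' :: "real \<Rightarrow> real"
  assumes "s \<le> t" "{s..t} \<subseteq> S"
    and "\<And>x. x \<in> {s..t} \<Longrightarrow> (f has_real_derivative f' x) (at x within S)"
    and "\<And>x. x \<in> {s..t} \<Longrightarrow> f' x \<le> 0"
  shows "f t \<le> f s"
proof -
  have "(\<lambda>x. - f x) s \<le> (\<lambda>x. - f x) t"
  proof (rule mono_deriv[OF assms(1,2), of _ "\<lambda>x. - f' x"])
    fix x assume x: "x \<in> {s..t}"
    show "((\<lambda>x. - f x) has_real_derivative - f' x) (at x within S)" by (intro DERIV_minus assms(3) x)
    show "0 \<le> - f' x" using assms(4)[OF x] by simp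
  qed
  thus ?thesis by simp
qed

context ccurve begin

lemma Ed: assumes t: "t \<in> {a..b}"
  shows "((\<lambda>t. cos be * X t + sin be * Y t) has_real_derivative v t * cos (Th t - be)) (at t within {a..b})"
proof -
  have "((\<lambda>t. cos be * X t + sin be * Y t) has_real_derivative cos be * X1 t + sin be * Y1 t) (at t within {a..b})"
    by (intro DERIV_add DERIV_cmult Xd Yd t)
  moreover have "cos be * X1 t + sin be * Y1 t = v t * cos (Th t - be)"
    by (simp add: tangent[OF t] cos_diff algebra_simps)
  ultimately show ?thesis by simp
qed

lemma Hd: assumes t: "t \<in> {a..b}"
  shows "((\<lambda>t. - sin be * X t + cos be * Y t) has_real_derivative v t * sin (Th t - be)) (at t within {a..b})"
proof -
  have "((\<lambda>t. - sin be * X t + cos be * Y t) has_real_derivative - sin be * X1 t + cos be * Y1 t) (at t within {a..b})"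
    by (intro DERIV_add DERIV_cmult Xd Yd t)
  moreover have "- sin be * X1 t + cos be * Y1 t = v t * sin (Th t - be)"
    by (simp add: tangent[OF t] sin_diff algebra_simps)
  ultimately show ?thesis by simp
qed

lemma Thbd: "t \<in> {a..b} \<Longrightarrow> ((\<lambda>t. Th t - be) has_real_derivative w t) (at t within {a..b})"
  using DERIV_diff[OF Thd DERIV_const, of t be] by simp

lemma Cd: "t \<in> {a..b} \<Longrightarrow> ((\<lambda>t. cos (Th t - be)) has_real_derivative - sin (Th t - be) * w t) (at t within {a..b})"
  by (rule d_cos[OF Thbd])
lemma Sd: "t \<in> {a..b} \<Longrightarrow> ((\<lambda>t. sin (Th t - be)) has_real_derivative cos (Th t - be) * w t) (at t within {a..b})"
  by (rule d_sin[OF Thbd])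

lemma Cc: "continuous_on {a..b} (\<lambda>t. cos (Th t - be))"
  using Cd DERIV_continuous continuous_on_eq_continuous_within by blast


lemma R2pos: "R2 > 0" using R by simp

lemma vw: "t \<in> {a..b} \<Longrightarrow> v t \<le> R2 * w t"
  using w_bounds(1)[of t] R2pos by (simp add: field_simps)

lemma claimH:
  assumes ij: "ti \<le> tj" "{ti..tj} \<subseteq> {a..b}"
    and Spos: "\<forall>t\<in>{ti..tj}. sin (Th t - be) \<ge> 0"
  shows "((cos be * X tj + sin be * Y tj) - (cos be * X ti + sin be * Y ti))\<^sup>2
     \<le> 2 * R2 * ((- sin be * X tj + cos be * Y tj) - (- sin be * X ti + cos be * Y ti))"
proof -
  define E where "E = (\<lambda>t. cos be * X t + sin be * Y t)"
  define H where "H = (\<lambda>t. - sin be * X t + cos be * Y t)"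
  define C where "C = (\<lambda>t. cos (Th t - be))"
  define S where "S = (\<lambda>t. sin (Th t - be))"
  have inab: "\<And>t. t \<in> {ti..tj} \<Longrightarrow> t \<in> {a..b}" using ij by auto
  have E': "\<And>t. t \<in> {a..b} \<Longrightarrow> (E has_real_derivative v t * C t) (at t within {a..b})"
    unfolding E_def C_def by (rule Ed)
  have H': "\<And>t. t \<in> {a..b} \<Longrightarrow> (H has_real_derivative v t * S t) (at t within {a..b})"
    unfolding H_def S_def by (rule Hd)
  have C': "\<And>t. t \<in> {a..b} \<Longrightarrow> (C has_real_derivative - S t * w t) (at t within {a..b})"
    unfolding C_def S_def by (rule Cd)
  have S': "\<And>t. t \<in> {a..b} \<Longrightarrow> (S has_real_derivative C t * w t) (at t within {a..b})"
    unfolding C_def S_def by (rule Sd)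
  have S0: "\<And>t. t \<in> {ti..tj} \<Longrightarrow> S t \<ge> 0" using Spos unfolding S_def by auto
  have C1: "\<And>t. C t \<le> 1" "\<And>t. - 1 \<le> C t" unfolding C_def by auto
  have R2p: "R2 > 0" by (rule R2pos)
  have Cdec: "\<And>s t. ti \<le> s \<Longrightarrow> s \<le> t \<Longrightarrow> t \<le> tj \<Longrightarrow> C t \<le> C s"
  proof -
    fix s t assume st: "ti \<le> s" "s \<le> t" "t \<le> tj"
    show "C t \<le> C s"
    proof (rule anti_deriv[OF st(2), of "{a..b}" C "\<lambda>x. - S x * w x"])
      show "{s..t} \<subseteq> {a..b}" using st ij by auto
      fix x assume x: "x \<in> {s..t}"
      hence x': "x \<in> {ti..tj}" using st by auto
      show "(C has_real_derivative - S x * w x) (at x within {a..b})" by (rule C'[OF inab[OF x']])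
      show "- S x * w x \<le> 0" using S0[OF x'] w_bounds(3)[OF inab[OF x']] by simp
    qed
  qed
  have Cc': "continuous_on {ti..tj} C" unfolding C_def using Cc ij(2) continuous_on_subset by blast
  obtain v0 where v0: "ti \<le> v0" "v0 \<le> tj" "v0 = ti \<or> (\<forall>t\<in>{ti..v0}. C t \<ge> 0)"
      "v0 = tj \<or> (\<forall>t\<in>{v0..tj}. C t \<le> 0)"
  proof (cases "C tj \<ge> 0")
    case True
    have "\<forall>t\<in>{ti..tj}. C t \<ge> 0"
    proof
      fix t assume "t \<in> {ti..tj}" thus "C t \<ge> 0" using Cdec[of t tj] True by auto
    qed
    thus ?thesis using that[of tj] ij by auto
  next
    case False
    show ?thesis
    proof (cases "C ti \<le> 0")
      case True
      have "\<forall>t\<in>{ti..tj}. C t \<le> 0"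
      proof
        fix t assume "t \<in> {ti..tj}" thus "C t \<le> 0" using Cdec[of ti t] True by auto
      qed
      thus ?thesis using that[of ti] ij by auto
    next
      case False2: False
      obtain z where z: "ti \<le> z" "z \<le> tj" "C z = 0"
        using IVT2'[of C tj 0 ti, OF _ _ ij(1) Cc'] False False2 by auto
      have "\<forall>t\<in>{ti..z}. C t \<ge> 0"
      proof
        fix t assume "t \<in> {ti..z}" thus "C t \<ge> 0" using Cdec[of t z] z by auto
      qed
      moreover have "\<forall>t\<in>{z..tj}. C t \<le> 0"
      proof
        fix t assume "t \<in> {z..tj}" thus "C t \<le> 0" using Cdec[of z t] z by auto
      qed
      ultimately show ?thesis using that[of z] z by auto
    qed
  qed
  have P1: "(E v0 - E ti)\<^sup>2 \<le> 2 * R2 * (H v0 - H ti) \<and> E ti \<le> E v0"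
  proof (cases "\<forall>t\<in>{ti..v0}. C t \<ge> 0")
    case False
    hence "v0 = ti" using v0 by auto
    thus ?thesis by simp
  next
    case True
    note c0 = True
  have F1: "E t - E ti \<le> R2 * S t" if t: "t \<in> {ti..v0}" for t
  proof -
    have "(\<lambda>x. R2 * S x - E x) ti \<le> (\<lambda>x. R2 * S x - E x) t"
    proof (rule mono_deriv[of ti t "{a..b}" _ "\<lambda>x. R2 * (C x * w x) - v x * C x"])
      show "ti \<le> t" "{ti..t} \<subseteq> {a..b}" using t v0 ij by auto
      fix x assume x: "x \<in> {ti..t}"
      hence x': "x \<in> {a..b}" "x \<in> {ti..v0}" using t v0 ij by auto
      show "((\<lambda>x. R2 * S x - E x) has_real_derivative R2 * (C x * w x) - v x * C x) (at x within {a..b})"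
        by (intro DERIV_diff DERIV_cmult S' E' x')
      have "0 \<le> C x * (R2 * w x - v x)" using c0 x'(2) vw[OF x'(1)] by simp
      thus "0 \<le> R2 * (C x * w x) - v x * C x" by (simp add: algebra_simps)
    qed
    moreover have "R2 * S ti \<ge> 0" using S0[of ti] ij R2p by simp
    ultimately show ?thesis by simp
  qed
  have G1: "(E v0 - E ti)\<^sup>2 \<le> 2 * R2 * (H v0 - H ti)"
  proof -
    have "(\<lambda>x. 2 * R2 * (H x - H ti) - (E x - E ti) * (E x - E ti)) ti
        \<le> (\<lambda>x. 2 * R2 * (H x - H ti) - (E x - E ti) * (E x - E ti)) v0"
    proof (rule mono_deriv[of ti v0 "{a..b}" _ "\<lambda>x. 2 * R2 * (v x * S x) - ((v x * C x) * (E x - E ti) + (v x * C x) * (E x - E ti))"])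
      show "ti \<le> v0" "{ti..v0} \<subseteq> {a..b}" using v0 ij by auto
      fix x assume x: "x \<in> {ti..v0}"
      hence x': "x \<in> {a..b}" "x \<in> {ti..tj}" using v0 ij by auto
      show "((\<lambda>x. 2 * R2 * (H x - H ti) - (E x - E ti) * (E x - E ti)) has_real_derivative
          2 * R2 * (v x * S x) - ((v x * C x) * (E x - E ti) + (v x * C x) * (E x - E ti))) (at x within {a..b})"
        using DERIV_diff[OF DERIV_cmult[OF DERIV_diff[OF H'[OF x'(1)] DERIV_const]]
              DERIV_mult[OF DERIV_diff[OF E'[OF x'(1)] DERIV_const] DERIV_diff[OF E'[OF x'(1)] DERIV_const]], of "2 * R2" "H ti" "E ti" "E ti"]
        by simp
      have h1: "(E x - E ti) * C x \<le> R2 * S x * C x" using mult_right_mono[OF F1[OF x]] c0 x by simp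
      have h2: "R2 * S x * C x \<le> R2 * S x" using mult_left_mono[OF C1(1), of "R2 * S x" x] S0[OF x'(2)] R2p by simp
      have "0 \<le> v x * (R2 * S x - (E x - E ti) * C x)" using h1 h2 v_pos[OF x'(1)] by simp
      thus "0 \<le> 2 * R2 * (v x * S x) - ((v x * C x) * (E x - E ti) + (v x * C x) * (E x - E ti))"
        by (simp add: algebra_simps)
    qed
    thus ?thesis by (simp add: power2_eq_square)
  qed
  have A1: "E ti \<le> E v0"
  proof (rule mono_deriv[of ti v0 "{a..b}" E "\<lambda>x. v x * C x"])
    show "ti \<le> v0" "{ti..v0} \<subseteq> {a..b}" using v0 ij by auto
    fix x assume x: "x \<in> {ti..v0}"
    hence x': "x \<in> {a..b}" using v0 ij by auto
    show "(E has_real_derivative v x * C x) (at x within {a..b})" by (rule E'[OF x'])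
    show "0 \<le> v x * C x" using c0 x v_pos[OF x'] by simp
  qed
    show ?thesis using G1 A1 by simp
  qed
  have P2: "(E v0 - E tj)\<^sup>2 \<le> 2 * R2 * (H tj - H v0) \<and> E tj \<le> E v0"
  proof (cases "\<forall>t\<in>{v0..tj}. C t \<le> 0")
    case False
    hence "v0 = tj" using v0 by auto
    thus ?thesis by simp
  next
    case True
    note c0 = True
  have F2: "E t - E tj \<le> R2 * S t" if t: "t \<in> {v0..tj}" for t
  proof -
    have "(\<lambda>x. R2 * S x - E x) tj \<le> (\<lambda>x. R2 * S x - E x) t"
    proof (rule anti_deriv[of t tj "{a..b}" _ "\<lambda>x. R2 * (C x * w x) - v x * C x"])
      show "t \<le> tj" "{t..tj} \<subseteq> {a..b}" using t v0 ij by auto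
      fix x assume x: "x \<in> {t..tj}"
      hence x': "x \<in> {a..b}" "x \<in> {v0..tj}" using t v0 ij by auto
      show "((\<lambda>x. R2 * S x - E x) has_real_derivative R2 * (C x * w x) - v x * C x) (at x within {a..b})"
        by (intro DERIV_diff DERIV_cmult S' E' x')
      have "C x * (R2 * w x - v x) \<le> 0" using c0 x'(2) vw[OF x'(1)] by (simp add: mult_nonpos_nonneg)
      thus "R2 * (C x * w x) - v x * C x \<le> 0" by (simp add: algebra_simps)
    qed
    moreover have "R2 * S tj \<ge> 0" using S0[of tj] ij R2p by simp
    ultimately show ?thesis by simp
  qed
  have G2: "(E v0 - E tj)\<^sup>2 \<le> 2 * R2 * (H tj - H v0)"
  proof -
    have "(\<lambda>x. 2 * R2 * (H tj - H x) - (E x - E tj) * (E x - E tj)) tj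
        \<le> (\<lambda>x. 2 * R2 * (H tj - H x) - (E x - E tj) * (E x - E tj)) v0"
    proof (rule anti_deriv[of v0 tj "{a..b}" _ "\<lambda>x. 2 * R2 * (0 - v x * S x) - ((v x * C x) * (E x - E tj) + (v x * C x) * (E x - E tj))"])
      show "v0 \<le> tj" "{v0..tj} \<subseteq> {a..b}" using v0 ij by auto
      fix x assume x: "x \<in> {v0..tj}"
      hence x': "x \<in> {a..b}" "x \<in> {ti..tj}" using v0 ij by auto
      show "((\<lambda>x. 2 * R2 * (H tj - H x) - (E x - E tj) * (E x - E tj)) has_real_derivative
          2 * R2 * (0 - v x * S x) - ((v x * C x) * (E x - E tj) + (v x * C x) * (E x - E tj))) (at x within {a..b})"
        using DERIV_diff[OF DERIV_cmult[OF DERIV_diff[OF DERIV_const H'[OF x'(1)]]]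
              DERIV_mult[OF DERIV_diff[OF E'[OF x'(1)] DERIV_const] DERIV_diff[OF E'[OF x'(1)] DERIV_const]], of "2 * R2" "H tj" "E tj" "E tj"]
        by simp
      have h1: "R2 * S x * C x \<le> (E x - E tj) * C x" using mult_right_mono_neg[OF F2[OF x]] c0 x by simp
      have h2: "- (R2 * S x) \<le> R2 * S x * C x" using mult_left_mono[OF C1(2), of "R2 * S x" x] S0[OF x'(2)] R2p by simp
      have "0 \<le> v x * (R2 * S x + (E x - E tj) * C x)" using h1 h2 v_pos[OF x'(1)] by simp
      thus "2 * R2 * (0 - v x * S x) - ((v x * C x) * (E x - E tj) + (v x * C x) * (E x - E tj)) \<le> 0"
        by (simp add: algebra_simps)
    qed
    thus ?thesis by (simp add: power2_eq_square)
  qed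
  have A2: "E tj \<le> E v0"
  proof (rule anti_deriv[of v0 tj "{a..b}" E "\<lambda>x. v x * C x"])
    show "v0 \<le> tj" "{v0..tj} \<subseteq> {a..b}" using v0 ij by auto
    fix x assume x: "x \<in> {v0..tj}"
    hence x': "x \<in> {a..b}" using v0 ij by auto
    show "(E has_real_derivative v x * C x) (at x within {a..b})" by (rule E'[OF x'])
    show "v x * C x \<le> 0" using c0 x v_pos[OF x'] by (simp add: mult_nonneg_nonpos)
  qed
    show ?thesis using G2 A2 by simp
  qed
  have G1: "(E v0 - E ti)\<^sup>2 \<le> 2 * R2 * (H v0 - H ti)" and A1: "E ti \<le> E v0" using P1 by auto
  have G2: "(E v0 - E tj)\<^sup>2 \<le> 2 * R2 * (H tj - H v0)" and A2: "E tj \<le> E v0" using P2 by auto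
  have "(E tj - E ti)\<^sup>2 = ((E v0 - E ti) + (E tj - E v0))\<^sup>2" by simp
  also have "\<dots> \<le> (E v0 - E ti)\<^sup>2 + (E v0 - E tj)\<^sup>2"
  proof -
    have "(E v0 - E ti) * (E tj - E v0) \<le> 0" using A1 A2 by (simp add: mult_nonneg_nonpos)
    thus ?thesis by (simp add: power2_eq_square algebra_simps)
  qed
  also have "\<dots> \<le> 2 * R2 * (H v0 - H ti) + 2 * R2 * (H tj - H v0)" using G1 G2 by simp
  also have "\<dots> = 2 * R2 * (H tj - H ti)" by (simp add: algebra_simps)
  finally show ?thesis unfolding E_def H_def .
qed

end

lemma d_sq: "(f has_real_derivative D) (at x within S) \<Longrightarrow>
  ((\<lambda>x. (f x - c)\<^sup>2) has_real_derivative 2 * (f x - c) * D) (at x within S)"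
  by (auto intro!: derivative_eq_intros simp: power2_eq_square)
lemma d_cube: "(f has_real_derivative D) (at x within S) \<Longrightarrow>
  ((\<lambda>x. (c - f x) ^ 3) has_real_derivative - 3 * (c - f x)\<^sup>2 * D) (at x within S)"
  by (auto intro!: derivative_eq_intros simp: power2_eq_square)

context ccurve begin

lemma tang_det: assumes "s \<le> t" "s \<in> {a..b}" "t \<in> {a..b}"
  shows "0 \<le> X1 s * Y1 t - Y1 s * X1 t"
    "X1 s * Y1 t - Y1 s * X1 t \<le> v s * v t * ((sig t - sig s) / R1)"
proof -
  have eq: "X1 s * Y1 t - Y1 s * X1 t = v s * v t * sin (Th t - Th s)"
    by (simp add: tangent[OF assms(2)] tangent[OF assms(3)] sin_diff algebra_simps)
  have m1: "Th a \<le> Th s" "Th s \<le> Th t" "Th t \<le> Th b" using assms by (auto intro!: Th_mono)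
  hence th: "0 \<le> Th t - Th s" "Th t - Th s \<le> pi" using Th_total by auto
  have vv: "v s * v t > 0" using v_pos assms by simp
  have "sin (Th t - Th s) \<ge> 0" using th by (intro sin_ge_zero) auto
  thus "0 \<le> X1 s * Y1 t - Y1 s * X1 t" unfolding eq using vv by simp
  have "sin (Th t - Th s) \<le> Th t - Th s" using th sin_x_le_x by auto
  also have "\<dots> \<le> (sig t - sig s) / R1" using Th_sig assms by auto
  finally show "X1 s * Y1 t - Y1 s * X1 t \<le> v s * v t * ((sig t - sig s) / R1)"
    unfolding eq using vv by (intro mult_left_mono) auto
qed


lemma inner_bd: assumes s: "s \<in> {a..b}" and st: "s \<le> t2" "t2 \<le> t3" "t3 \<le> b"
  shows "0 \<le> X1 s * (Y t3 - Y t2) - Y1 s * (X t3 - X t2)"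
    "X1 s * (Y t3 - Y t2) - Y1 s * (X t3 - X t2)
      \<le> v s / (2 * R1) * ((sig t3 - sig s)\<^sup>2 - (sig t2 - sig s)\<^sup>2)"
proof -
  define D where "D = (\<lambda>t. X1 s * (Y t - Y t2) - Y1 s * (X t - X t2))"
  define B where "B = (\<lambda>t. v s / (2 * R1) * ((sig t - sig s)\<^sup>2 - (sig t2 - sig s)\<^sup>2))"
  have sub: "{t2..t3} \<subseteq> {a..b}" using s st by auto
  have D': "(D has_real_derivative X1 s * Y1 x - Y1 s * X1 x) (at x within {a..b})" if "x \<in> {t2..t3}" for x
  proof -
    have x: "x \<in> {a..b}" using that sub by auto
    show ?thesis unfolding D_def
      using DERIV_diff[OF DERIV_cmult[OF DERIV_diff[OF Yd[OF x] DERIV_const]] DERIV_cmult[OF DERIV_diff[OF Xd[OF x] DERIV_const]], of "X1 s" "Y t2" "Y1 s" "X t2"]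
      by simp
  qed
  have B': "(B has_real_derivative v s / (2 * R1) * (2 * (sig x - sig s) * v x - 0)) (at x within {a..b})" if "x \<in> {t2..t3}" for x
  proof -
    have x: "x \<in> {a..b}" using that sub by auto
    show ?thesis unfolding B_def
      by (intro DERIV_cmult DERIV_diff d_sq sigd x DERIV_const)
  qed
  have "D t2 \<le> D t3"
  proof (rule mono_deriv[OF st(2) sub, of D])
    fix x assume x: "x \<in> {t2..t3}"
    show "(D has_real_derivative X1 s * Y1 x - Y1 s * X1 x) (at x within {a..b})" by (rule D'[OF x])
    show "0 \<le> X1 s * Y1 x - Y1 s * X1 x" using x st s sub by (intro tang_det) auto
  qed
  thus "0 \<le> X1 s * (Y t3 - Y t2) - Y1 s * (X t3 - X t2)" unfolding D_def by simp
  have "(\<lambda>t. B t - D t) t2 \<le> (\<lambda>t. B t - D t) t3"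
  proof (rule mono_deriv[OF st(2) sub])
    fix x assume x: "x \<in> {t2..t3}"
    hence xab: "x \<in> {a..b}" using sub by auto
    show "((\<lambda>t. B t - D t) has_real_derivative
       v s / (2 * R1) * (2 * (sig x - sig s) * v x - 0) - (X1 s * Y1 x - Y1 s * X1 x)) (at x within {a..b})"
      by (intro DERIV_diff B' D' x)
    have "X1 s * Y1 x - Y1 s * X1 x \<le> v s * v x * ((sig x - sig s) / R1)"
      using x st s sub by (intro tang_det) auto
    also have "\<dots> = v s / (2 * R1) * (2 * (sig x - sig s) * v x - 0)" using R by (simp add: field_simps)
    finally show "0 \<le> v s / (2 * R1) * (2 * (sig x - sig s) * v x - 0) - (X1 s * Y1 x - Y1 s * X1 x)" by simp
  qed
  thus "X1 s * (Y t3 - Y t2) - Y1 s * (X t3 - X t2)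
      \<le> v s / (2 * R1) * ((sig t3 - sig s)\<^sup>2 - (sig t2 - sig s)\<^sup>2)"
    unfolding B_def D_def by simp
qed

lemma area_upper: assumes t: "a \<le> t1" "t1 \<le> t2" "t2 \<le> t3" "t3 \<le> b"
  shows "0 \<le> (X t2 - X t1) * (Y t3 - Y t2) - (Y t2 - Y t1) * (X t3 - X t2)"
    "(X t2 - X t1) * (Y t3 - Y t2) - (Y t2 - Y t1) * (X t3 - X t2)
      \<le> (sig t2 - sig t1) * (sig t3 - sig t2) * (sig t3 - sig t1) / (2 * R1)"
proof -
  define Z where "Z = (\<lambda>s. (X s - X t1) * (Y t3 - Y t2) - (Y s - Y t1) * (X t3 - X t2))"
  define W where "W = (\<lambda>s. - ((sig t3 - sig s) ^ 3 - (sig t2 - sig s) ^ 3) / (6 * R1))"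
  have sub: "{t1..t2} \<subseteq> {a..b}" using t by auto
  have Z': "(Z has_real_derivative X1 x * (Y t3 - Y t2) - Y1 x * (X t3 - X t2)) (at x within {a..b})"
    if "x \<in> {t1..t2}" for x
  proof -
    have x: "x \<in> {a..b}" using that sub by auto
    show ?thesis unfolding Z_def
      using DERIV_diff[OF DERIV_mult[OF DERIV_diff[OF Xd[OF x] DERIV_const] DERIV_const]
          DERIV_mult[OF DERIV_diff[OF Yd[OF x] DERIV_const] DERIV_const], of "X t1" "Y t3 - Y t2" "Y t1" "X t3 - X t2"]
      by simp
  qed
  have W': "(W has_real_derivative - (- 3 * (sig t3 - sig x)\<^sup>2 * v x - - 3 * (sig t2 - sig x)\<^sup>2 * v x) / (6 * R1)) (at x within {a..b})"
    if "x \<in> {t1..t2}" for x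
  proof -
    have x: "x \<in> {a..b}" using that sub by auto
    show ?thesis unfolding W_def
      by (intro DERIV_cdivide DERIV_minus DERIV_diff d_cube sigd x)
  qed
  have "Z t1 \<le> Z t2"
  proof (rule mono_deriv[OF t(2) sub, of Z])
    fix x assume x: "x \<in> {t1..t2}"
    show "(Z has_real_derivative X1 x * (Y t3 - Y t2) - Y1 x * (X t3 - X t2)) (at x within {a..b})" by (rule Z'[OF x])
    show "0 \<le> X1 x * (Y t3 - Y t2) - Y1 x * (X t3 - X t2)" using x t sub by (intro inner_bd) auto
  qed
  thus "0 \<le> (X t2 - X t1) * (Y t3 - Y t2) - (Y t2 - Y t1) * (X t3 - X t2)" unfolding Z_def by simp
  have "(\<lambda>s. W s - Z s) t1 \<le> (\<lambda>s. W s - Z s) t2"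
  proof (rule mono_deriv[OF t(2) sub])
    fix x assume x: "x \<in> {t1..t2}"
    show "((\<lambda>s. W s - Z s) has_real_derivative
      - (- 3 * (sig t3 - sig x)\<^sup>2 * v x - - 3 * (sig t2 - sig x)\<^sup>2 * v x) / (6 * R1)
       - (X1 x * (Y t3 - Y t2) - Y1 x * (X t3 - X t2))) (at x within {a..b})"
      by (intro DERIV_diff W' Z' x)
    have "X1 x * (Y t3 - Y t2) - Y1 x * (X t3 - X t2) \<le> v x / (2 * R1) * ((sig t3 - sig x)\<^sup>2 - (sig t2 - sig x)\<^sup>2)"
      using x t sub by (intro inner_bd) auto
    also have "\<dots> = - (- 3 * (sig t3 - sig x)\<^sup>2 * v x - - 3 * (sig t2 - sig x)\<^sup>2 * v x) / (6 * R1)"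
      using R by (simp add: field_simps)
    finally show "0 \<le> - (- 3 * (sig t3 - sig x)\<^sup>2 * v x - - 3 * (sig t2 - sig x)\<^sup>2 * v x) / (6 * R1)
       - (X1 x * (Y t3 - Y t2) - Y1 x * (X t3 - X t2))" by simp
  qed
  hence "Z t2 \<le> W t2 - W t1" unfolding Z_def by simp
  also have "W t2 - W t1 = (sig t2 - sig t1) * (sig t3 - sig t2) * (sig t3 - sig t1) / (2 * R1)"
    unfolding W_def using R by (simp add: field_simps power3_eq_cube)
  finally show "(X t2 - X t1) * (Y t3 - Y t2) - (Y t2 - Y t1) * (X t3 - X t2)
      \<le> (sig t2 - sig t1) * (sig t3 - sig t2) * (sig t3 - sig t1) / (2 * R1)" unfolding Z_def by simp
qed

end

lemma sin_sign: fixes k :: int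
  assumes "of_int k * pi \<le> x" "x \<le> (of_int k + 1) * pi"
  shows "(even k \<longrightarrow> sin x \<ge> 0) \<and> (odd k \<longrightarrow> sin x \<le> 0)"
proof -
  have y: "0 \<le> x - pi * of_int k" "x - pi * of_int k \<le> pi" using assms by (auto simp: algebra_simps)
  have s: "sin (x - pi * of_int k) \<ge> 0" using y by (intro sin_ge_zero) auto
  have "sin x = sin ((x - pi * of_int k) + pi * of_int k)" by simp
  also have "\<dots> = sin (x - pi * of_int k) * (if even k then 1 else -1)"
    by (simp only: sin_add sin_npi_int cos_npi_int) 
  finally show ?thesis using s by auto
qed

lemma lin_bound: "\<bar>cos be * p $ 1 + sin be * p $ 2\<bar> \<le> norm (p::real^2)"
proof -
  have gen: "\<And>c s x y :: real. (c * x + s * y)\<^sup>2 + (- s * x + c * y)\<^sup>2 = (c\<^sup>2 + s\<^sup>2) * (x\<^sup>2 + y\<^sup>2)"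
    by (simp add: power2_eq_square algebra_simps)
  have "(cos be * p $ 1 + sin be * p $ 2)\<^sup>2 + (- sin be * p $ 1 + cos be * p $ 2)\<^sup>2
      = ((cos be)\<^sup>2 + (sin be)\<^sup>2) * ((p$1)\<^sup>2 + (p$2)\<^sup>2)"
    by (rule gen)
  also have "\<dots> = (p$1)\<^sup>2 + (p$2)\<^sup>2" by (simp only: sin_cos_squared_add2 mult_1)
  finally have eq: "(cos be * p $ 1 + sin be * p $ 2)\<^sup>2 + (- sin be * p $ 1 + cos be * p $ 2)\<^sup>2 = (p$1)\<^sup>2 + (p$2)\<^sup>2" .
  have "(cos be * p $ 1 + sin be * p $ 2)\<^sup>2 \<le> (p$1)\<^sup>2 + (p$2)\<^sup>2"
    using eq zero_le_power2[of "- sin be * p $ 1 + cos be * p $ 2"] by linarith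
  hence "sqrt ((cos be * p $ 1 + sin be * p $ 2)\<^sup>2) \<le> sqrt ((p$1)\<^sup>2 + (p$2)\<^sup>2)" by (rule real_sqrt_le_mono)
  thus ?thesis by (simp add: norm2)
qed

context ccurve begin

lemma unimodal:
  assumes t: "a \<le> t1" "t1 \<le> t2" "t2 \<le> t3" "t3 \<le> b"
  shows "(\<forall>t\<in>{t1..t2}. sin (Th t - be) \<ge> 0) \<or> (\<forall>t\<in>{t1..t2}. sin (Th t - be) \<le> 0) \<or>
         (\<forall>t\<in>{t2..t3}. sin (Th t - be) \<ge> 0) \<or> (\<forall>t\<in>{t2..t3}. sin (Th t - be) \<le> 0)"
proof -
  define k where "k = \<lfloor>(Th t1 - be) / pi\<rfloor>"
  have k1: "of_int k * pi \<le> Th t1 - be"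
  proof -
    have "of_int k \<le> (Th t1 - be) / pi" unfolding k_def by simp
    thus ?thesis using pi_gt_zero by (simp add: field_simps)
  qed
  have k2: "Th t1 - be < (of_int k + 1) * pi"
  proof -
    have "(Th t1 - be) / pi < of_int k + 1" unfolding k_def by linarith
    thus ?thesis using pi_gt_zero by (simp add: field_simps)
  qed
  have mono: "\<And>s t. a \<le> s \<Longrightarrow> s \<le> t \<Longrightarrow> t \<le> b \<Longrightarrow> Th s \<le> Th t" by (intro Th_mono) auto
  have tot: "Th t3 - Th t1 \<le> pi"
  proof -
    have "Th a \<le> Th t1" "Th t3 \<le> Th b" using t mono by auto
    thus ?thesis using Th_total by simp
  qed
  show ?thesis
  proof (cases "Th t2 - be \<le> (of_int k + 1) * pi")
    case True
    have "\<forall>t\<in>{t1..t2}. (even k \<longrightarrow> sin (Th t - be) \<ge> 0) \<and> (odd k \<longrightarrow> sin (Th t - be) \<le> 0)"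
    proof
      fix x assume x: "x \<in> {t1..t2}"
      have "Th t1 \<le> Th x" "Th x \<le> Th t2" using x t mono by auto
      thus "(even k \<longrightarrow> sin (Th x - be) \<ge> 0) \<and> (odd k \<longrightarrow> sin (Th x - be) \<le> 0)"
        using k1 True by (intro sin_sign) auto
    qed
    thus ?thesis by blast
  next
    case False
    have "\<forall>t\<in>{t2..t3}. (even (k+1) \<longrightarrow> sin (Th t - be) \<ge> 0) \<and> (odd (k+1) \<longrightarrow> sin (Th t - be) \<le> 0)"
    proof
      fix x assume x: "x \<in> {t2..t3}"
      have "Th t2 \<le> Th x" "Th x \<le> Th t3" using x t mono by auto
      thus "(even (k+1) \<longrightarrow> sin (Th x - be) \<ge> 0) \<and> (odd (k+1) \<longrightarrow> sin (Th x - be) \<le> 0)"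
        using k2 False tot by (intro sin_sign) (auto simp: algebra_simps)
    qed
    thus ?thesis by blast
  qed
qed

lemma chord: assumes "a \<le> s" "s \<le> t" "t \<le> b"
  shows "norm (g t - g s) \<le> sig t - sig s"
proof (cases "g t = g s")
  case True
  thus ?thesis using sig_mono[of s t] assms by auto
next
  case False
  define u where "u = g t - g s"
  have nu: "norm u > 0" using False unfolding u_def by simp
  have nsq: "(norm u)\<^sup>2 = (u$1)\<^sup>2 + (u$2)\<^sup>2" by (simp add: norm2)
  have "(u$1 / norm u)\<^sup>2 + (u$2 / norm u)\<^sup>2 = ((u$1)\<^sup>2 + (u$2)\<^sup>2) / (norm u)\<^sup>2"
    by (simp add: power_divide add_divide_distrib)
  also have "\<dots> = 1" unfolding nsq[symmetric] using nu by simp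
  finally have "(u$1 / norm u)\<^sup>2 + (u$2 / norm u)\<^sup>2 = 1" .
  then obtain be where be: "u$1 / norm u = cos be" "u$2 / norm u = sin be" by (rule sincos_total_2pi)
  have "(\<lambda>x. sig x - (cos be * X x + sin be * Y x)) s \<le> (\<lambda>x. sig x - (cos be * X x + sin be * Y x)) t"
  proof (rule mono_deriv[OF assms(2), of "{a..b}" _ "\<lambda>x. v x - v x * cos (Th x - be)"])
    show "{s..t} \<subseteq> {a..b}" using assms by auto
    fix x assume "x \<in> {s..t}" hence x: "x \<in> {a..b}" using assms by auto
    show "((\<lambda>x. sig x - (cos be * X x + sin be * Y x)) has_real_derivative v x - v x * cos (Th x - be)) (at x within {a..b})"
      by (intro DERIV_diff sigd Ed x)
    have "v x * cos (Th x - be) \<le> v x * 1" using v_pos[OF x] by (intro mult_left_mono) auto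
    thus "0 \<le> v x - v x * cos (Th x - be)" by simp
  qed
  hence "cos be * (X t - X s) + sin be * (Y t - Y s) \<le> sig t - sig s" by (simp add: algebra_simps)
  moreover have "cos be * (X t - X s) + sin be * (Y t - Y s) = norm u"
  proof -
    have "cos be * (X t - X s) + sin be * (Y t - Y s) = (u$1 * u$1 + u$2 * u$2) / norm u"
      unfolding be[symmetric] u_def X_def Y_def by (simp add: add_divide_distrib)
    also have "\<dots> = (norm u)\<^sup>2 / norm u" by (simp add: norm2 power2_eq_square)
    also have "\<dots> = norm u" using nu by (simp add: power2_eq_square)
    finally show ?thesis .
  qed
  ultimately show ?thesis unfolding u_def by simp
qed

end

lemma lin_bound': "\<bar>- sin be * p $ 1 + cos be * p $ 2\<bar> \<le> norm (p::real^2)"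
  using lin_bound[of "be + pi/2" p] by (simp add: cos_add sin_add)

lemma lin_sq: "(cos be * p $ 1 + sin be * p $ 2)\<^sup>2 + (- sin be * p $ 1 + cos be * p $ 2)\<^sup>2 = (norm (p::real^2))\<^sup>2"
proof -
  have gen: "\<And>c s x y :: real. (c * x + s * y)\<^sup>2 + (- s * x + c * y)\<^sup>2 = (c\<^sup>2 + s\<^sup>2) * (x\<^sup>2 + y\<^sup>2)"
    by (simp add: power2_eq_square algebra_simps)
  have "(cos be * p $ 1 + sin be * p $ 2)\<^sup>2 + (- sin be * p $ 1 + cos be * p $ 2)\<^sup>2
      = ((cos be)\<^sup>2 + (sin be)\<^sup>2) * ((p$1)\<^sup>2 + (p$2)\<^sup>2)" by (rule gen)
  also have "\<dots> = (p$1)\<^sup>2 + (p$2)\<^sup>2" by (simp only: sin_cos_squared_add2 mult_1)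
  finally show ?thesis by (simp add: norm2)
qed

context ccurve begin

lemma pair_contra:
  assumes t: "ti \<le> tj" "a \<le> ti" "tj \<le> b"
    and sgn: "(\<forall>t\<in>{ti..tj}. sin (Th t - be) \<ge> 0) \<or> (\<forall>t\<in>{ti..tj}. sin (Th t - be) \<le> 0)"
    and dP: "norm (g ti - Qi) < \<delta>" "norm (g tj - Qj) < \<delta>"
    and line: "- sin be * (Qj - Qi)$1 + cos be * (Qj - Qi)$2 = 0"
    and far: "norm (Qj - Qi) \<ge> d"
    and dd: "d - 2 * \<delta> > 0" "(d - 2 * \<delta>)\<^sup>2 > 4 * R2 * \<delta>"
  shows False
proof -
  define E where "E = (\<lambda>p::real^2. cos be * p $ 1 + sin be * p $ 2)"
  define H where "H = (\<lambda>p::real^2. - sin be * p $ 1 + cos be * p $ 2)"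
  have Elin: "\<And>p q. E (p - q) = E p - E q" unfolding E_def by (simp add: algebra_simps)
  have Hlin: "\<And>p q. H (p - q) = H p - H q" unfolding H_def by (simp add: algebra_simps)
  have sub: "{ti..tj} \<subseteq> {a..b}" using t by auto
  have key: "(E (g tj) - E (g ti))\<^sup>2 \<le> 2 * R2 * \<bar>H (g tj) - H (g ti)\<bar>"
    using sgn
  proof
    assume "\<forall>t\<in>{ti..tj}. sin (Th t - be) \<ge> 0"
    from claimH[OF t(1) sub this]
    have "(E (g tj) - E (g ti))\<^sup>2 \<le> 2 * R2 * (H (g tj) - H (g ti))"
      unfolding E_def H_def X_def Y_def .
    also have "\<dots> \<le> 2 * R2 * \<bar>H (g tj) - H (g ti)\<bar>" using R2pos by (intro mult_left_mono) auto
    finally show ?thesis .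
  next
    assume "\<forall>t\<in>{ti..tj}. sin (Th t - be) \<le> 0"
    moreover have sp: "\<And>x. sin (x - (be + pi)) = - sin (x - be)"
      by (simp add: sin_diff cos_add sin_add)
    ultimately have "\<forall>t\<in>{ti..tj}. sin (Th t - (be + pi)) \<ge> 0" by (simp only: sp) auto
    from claimH[OF t(1) sub this]
    have "(E (g tj) - E (g ti))\<^sup>2 \<le> 2 * R2 * (- (H (g tj) - H (g ti)))"
      unfolding E_def H_def X_def Y_def by (simp add: algebra_simps power2_eq_square)
    also have "\<dots> \<le> 2 * R2 * \<bar>H (g tj) - H (g ti)\<bar>" using R2pos by (intro mult_left_mono) auto
    finally show ?thesis .
  qed
  have "H (g tj) - H (g ti) = H (g tj - Qj) + H (Qj - Qi) - H (g ti - Qi)" using Hlin by simp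
  moreover have "H (Qj - Qi) = 0" using line unfolding H_def .
  moreover have "\<bar>H (g tj - Qj)\<bar> < \<delta>" "\<bar>H (g ti - Qi)\<bar> < \<delta>"
    using lin_bound'[of be] dP unfolding H_def by (meson le_less_trans)+
  ultimately have Hb: "\<bar>H (g tj) - H (g ti)\<bar> < 2 * \<delta>" by linarith
  have "(E (Qj - Qi))\<^sup>2 = (norm (Qj - Qi))\<^sup>2" using lin_sq[of be "Qj - Qi"] line unfolding E_def by simp
  hence "sqrt ((E (Qj - Qi))\<^sup>2) = sqrt ((norm (Qj - Qi))\<^sup>2)" by simp
  hence "\<bar>E (Qj - Qi)\<bar> = norm (Qj - Qi)" by simp
  moreover have "E (g tj) - E (g ti) = E (g tj - Qj) + E (Qj - Qi) - E (g ti - Qi)" using Elin by simp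
  moreover have "\<bar>E (g tj - Qj)\<bar> < \<delta>" "\<bar>E (g ti - Qi)\<bar> < \<delta>"
    using lin_bound[of be] dP unfolding E_def by (meson le_less_trans)+
  ultimately have "\<bar>E (g tj) - E (g ti)\<bar> > d - 2 * \<delta>" using far by linarith
  hence "(d - 2 * \<delta>)\<^sup>2 < \<bar>E (g tj) - E (g ti)\<bar>\<^sup>2" using dd(1)
    by (intro power_strict_mono) auto
  hence "(d - 2 * \<delta>)\<^sup>2 < (E (g tj) - E (g ti))\<^sup>2" by simp
  also have "\<dots> \<le> 2 * R2 * \<bar>H (g tj) - H (g ti)\<bar>" by (rule key)
  also have "\<dots> \<le> 2 * R2 * (2 * \<delta>)" using Hb R2pos by (intro mult_left_mono) auto
  finally show False using dd(2) by simp
qed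

end

lemma det2_sub: "det2 (p - q) r = det2 p r - det2 q r" "det2 r (p - q) = det2 r p - det2 r q"
  unfolding det2_def by (simp_all add: algebra_simps)

lemma perturb:
  fixes P1 P2 P3 Q1 Q2 Q3 :: "real^2"
  assumes "norm (Q1 - P1) < \<delta>" "norm (Q2 - P2) < \<delta>" "norm (Q3 - P3) < \<delta>"
  shows "\<bar>det2 (Q2 - Q1) (Q3 - Q1)\<bar> < \<bar>det2 (P2 - P1) (P3 - P1)\<bar>
     + \<delta> * (norm (P1 - P2) + norm (P2 - P3) + norm (P3 - P1)) + 3 * \<delta>\<^sup>2"
proof -
  define e1 where "e1 = Q1 - P1"
  define e2 where "e2 = Q2 - P2"
  define e3 where "e3 = Q3 - P3"
  have id: "det2 (Q2 - Q1) (Q3 - Q1) = det2 (P2 - P1) (P3 - P1) + det2 e1 (P2 - P3) + det2 e2 (P3 - P1)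
      + det2 e3 (P1 - P2) + det2 e1 e2 + det2 e2 e3 + det2 e3 e1"
    unfolding e1_def e2_def e3_def det2_def by (simp add: algebra_simps)
  have dp: "0 \<le> \<delta>" using assms(1) norm_ge_zero[of "Q1 - P1"] by linarith
  have l1: "\<bar>det2 e1 (P2 - P3)\<bar> \<le> \<delta> * norm (P2 - P3)"
    using det2_bound[of e1 "P2 - P3"] mult_right_mono[of "norm e1" \<delta> "norm (P2 - P3)"] assms(1)
    unfolding e1_def by simp
  have l2: "\<bar>det2 e2 (P3 - P1)\<bar> \<le> \<delta> * norm (P3 - P1)"
    using det2_bound[of e2 "P3 - P1"] mult_right_mono[of "norm e2" \<delta> "norm (P3 - P1)"] assms(2)
    unfolding e2_def by simp
  have l3: "\<bar>det2 e3 (P1 - P2)\<bar> \<le> \<delta> * norm (P1 - P2)"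
    using det2_bound[of e3 "P1 - P2"] mult_right_mono[of "norm e3" \<delta> "norm (P1 - P2)"] assms(3)
    unfolding e3_def by simp
  have q: "\<And>x y :: real^2. norm x < \<delta> \<Longrightarrow> norm y < \<delta> \<Longrightarrow> \<bar>det2 x y\<bar> < \<delta>\<^sup>2"
  proof -
    fix x y :: "real^2" assume "norm x < \<delta>" "norm y < \<delta>"
    hence "norm x * norm y < \<delta> * \<delta>" by (intro mult_strict_mono') auto
    thus "\<bar>det2 x y\<bar> < \<delta>\<^sup>2" using det2_bound[of x y] by (simp add: power2_eq_square)
  qed
  have q1: "\<bar>det2 e1 e2\<bar> < \<delta>\<^sup>2" using q assms unfolding e1_def e2_def by simp
  have q2: "\<bar>det2 e2 e3\<bar> < \<delta>\<^sup>2" using q assms unfolding e2_def e3_def by simp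
  have q3: "\<bar>det2 e3 e1\<bar> < \<delta>\<^sup>2" using q assms unfolding e1_def e3_def by simp
  show ?thesis unfolding id using l1 l2 l3 q1 q2 q3 by (simp add: algebra_simps)
qed

lemma lattice_det:
  assumes "Q1 \<in> lattice v0 v1 v2" "Q2 \<in> lattice v0 v1 v2" "Q3 \<in> lattice v0 v1 v2"
    and "det2 (Q2 - Q1) (Q3 - Q1) \<noteq> 0"
  shows "\<bar>det2 (Q2 - Q1) (Q3 - Q1)\<bar> \<ge> lattice_area v1 v2"
proof -
  obtain m1 n1 where 1: "Q1 = v0 + of_int m1 *\<^sub>R v1 + of_int n1 *\<^sub>R v2" using assms(1) unfolding lattice_def by auto
  obtain m2 n2 where 2: "Q2 = v0 + of_int m2 *\<^sub>R v1 + of_int n2 *\<^sub>R v2" using assms(2) unfolding lattice_def by auto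
  obtain m3 n3 where 3: "Q3 = v0 + of_int m3 *\<^sub>R v1 + of_int n3 *\<^sub>R v2" using assms(3) unfolding lattice_def by auto
  define k where "k = (m2 - m1) * (n3 - n1) - (n2 - n1) * (m3 - m1)"
  have eq: "det2 (Q2 - Q1) (Q3 - Q1) = of_int k * det2 v1 v2"
    unfolding 1 2 3 k_def det2_def by (simp add: algebra_simps)
  have "k \<noteq> 0" using assms(4) eq by auto
  hence "\<bar>of_int k :: real\<bar> \<ge> 1" by linarith
  hence "\<bar>of_int k :: real\<bar> * \<bar>det2 v1 v2\<bar> \<ge> 1 * \<bar>det2 v1 v2\<bar>" by (intro mult_right_mono) auto
  thus ?thesis unfolding eq lattice_area_def by (simp add: abs_mult)
qed

lemma mindist_le:
  assumes "P \<in> L" "Q \<in> L" "P \<noteq> Q"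
  shows "lattice_mindist L \<le> norm (P - Q)"
proof -
  have "dist P Q \<in> {dist P Q | P Q. P \<in> L \<and> Q \<in> L \<and> P \<noteq> Q}" using assms by blast
  moreover have "bdd_below {dist P Q | P Q. P \<in> L \<and> Q \<in> L \<and> P \<noteq> Q}" by (rule bdd_belowI[of _ 0]) auto
  ultimately have "lattice_mindist L \<le> dist P Q" unfolding lattice_mindist_def by (rule cInf_lower)
  thus ?thesis by (simp add: dist_norm)
qed

lemma mindist_nonneg:
  assumes "P \<in> L" "Q \<in> L" "P \<noteq> Q"
  shows "lattice_mindist L \<ge> 0"
proof -
  have "{dist P Q | P Q. P \<in> L \<and> Q \<in> L \<and> P \<noteq> Q} \<noteq> {}" using assms by blast
  thus ?thesis unfolding lattice_mindist_def by (rule cInf_greatest) auto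
qed

lemma d_cond:
  fixes d R2 \<delta> :: real
  assumes "d \<ge> 0" "R2 > 0" "\<delta> > 0"
    and "\<delta> < d\<^sup>2 / (2 * (R2 + d + sqrt ((R2 + d)\<^sup>2 - d\<^sup>2)))"
  shows "d - 2 * \<delta> > 0" "(d - 2 * \<delta>)\<^sup>2 > 4 * R2 * \<delta>"
proof -
  define R' where "R' = R2 + d"
  define S where "S = sqrt (R'\<^sup>2 - d\<^sup>2)"
  have R'p: "R' > 0" "R' \<ge> d" using assms unfolding R'_def by auto
  have "d\<^sup>2 \<le> R'\<^sup>2" using R'p assms(1) by (intro power_mono) auto
  hence inside: "R'\<^sup>2 - d\<^sup>2 \<ge> 0" by linarith
  have S0: "S \<ge> 0" unfolding S_def by (rule real_sqrt_ge_zero[OF inside])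
  have S2: "S\<^sup>2 = R'\<^sup>2 - d\<^sup>2" unfolding S_def by (rule real_sqrt_pow2[OF inside])
  have dl: "\<delta> < d\<^sup>2 / (2 * (R' + S))" using assms(4) unfolding R'_def S_def by simp
  have den: "R' + S > 0" using R'p S0 by simp
  have "d\<^sup>2 = (R' + S) * (R' - S)" using S2 by (simp add: algebra_simps power2_eq_square)
  hence eqd: "d\<^sup>2 / (2 * (R' + S)) = (R' - S) / 2" using den by (simp add: field_simps)
  have "\<delta> < (R' - S) / 2" using dl unfolding eqd .
  hence h1: "2 * \<delta> < R' - S" by simp
  have dpos: "d > 0"
  proof (rule ccontr)
    assume "\<not> d > 0" hence "d = 0" using assms(1) by simp
    thus False using dl assms(3) by simp
  qed
  have dsq: "d * d = (R' + S) * (R' - S)" using S2 by (simp add: algebra_simps power2_eq_square)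
  have "R' - S \<le> d"
  proof (rule ccontr)
    assume "\<not> R' - S \<le> d" hence "d < R' - S" by simp
    hence "d * d < (R' + S) * (R' - S)" using R'p S0 dpos by (intro mult_le_less_imp_less) auto
    thus False using dsq by simp
  qed
  hence "\<delta> < d / 2" using h1 by simp
  thus "d - 2 * \<delta> > 0" by simp
  have "S < R' - 2 * \<delta>" using h1 by simp
  hence "S\<^sup>2 < (R' - 2 * \<delta>)\<^sup>2" using S0 by (intro power_strict_mono) auto
  hence "R'\<^sup>2 - d\<^sup>2 < (R' - 2 * \<delta>)\<^sup>2" unfolding S2 .
  thus "(d - 2 * \<delta>)\<^sup>2 > 4 * R2 * \<delta>" unfolding R'_def by (simp add: power2_eq_square algebra_simps)
qed


lemma cube_root: assumes "(x::real) > 0" shows "(x powr (1/3)) ^ 3 = x"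
proof -
  have "(x powr (1/3)) ^ 3 = (x powr (1/3)) powr (real 3)"
    using assms by (simp add: powr_realpow)
  also have "\<dots> = x" using assms by (simp add: powr_powr)
  finally show ?thesis .
qed

context ccurve begin

lemma nondeg:
  assumes t: "a \<le> t1" "t1 \<le> t2" "t2 \<le> t3" "t3 \<le> b"
    and dP: "norm (g t1 - Q1) < \<delta>" "norm (g t2 - Q2) < \<delta>" "norm (g t3 - Q3) < \<delta>"
    and far: "norm (Q2 - Q1) \<ge> d" "norm (Q3 - Q2) \<ge> d"
    and dd: "d - 2 * \<delta> > 0" "(d - 2 * \<delta>)\<^sup>2 > 4 * R2 * \<delta>" "\<delta> > 0"
  shows "det2 (Q2 - Q1) (Q3 - Q1) \<noteq> 0"
proof
  assume det0: "det2 (Q2 - Q1) (Q3 - Q1) = 0"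
  define u where "u = Q2 - Q1"
  have nu: "norm u > 0" using far(1) dd unfolding u_def by linarith
  have nsq: "(norm u)\<^sup>2 = (u$1)\<^sup>2 + (u$2)\<^sup>2" by (simp add: norm2)
  have "(u$1 / norm u)\<^sup>2 + (u$2 / norm u)\<^sup>2 = ((u$1)\<^sup>2 + (u$2)\<^sup>2) / (norm u)\<^sup>2"
    by (simp add: power_divide add_divide_distrib)
  also have "\<dots> = 1" unfolding nsq[symmetric] using nu by simp
  finally have "(u$1 / norm u)\<^sup>2 + (u$2 / norm u)\<^sup>2 = 1" .
  then obtain be where be: "u$1 / norm u = cos be" "u$2 / norm u = sin be" by (rule sincos_total_2pi)
  define H where "H = (\<lambda>p::real^2. - sin be * p $ 1 + cos be * p $ 2)"
  have Hlin: "\<And>p q. H (p - q) = H p - H q" unfolding H_def by (simp add: algebra_simps)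
  have H21: "H (Q2 - Q1) = 0" unfolding H_def be[symmetric] u_def by (simp add: algebra_simps)
  have H31: "H (Q3 - Q1) = 0"
  proof -
    have "H (Q3 - Q1) = det2 u (Q3 - Q1) / norm u" unfolding H_def be[symmetric] det2_def
      by (simp add: algebra_simps add_divide_distrib diff_divide_distrib)
    thus ?thesis using det0 unfolding u_def by simp
  qed
  have H32: "H (Q3 - Q2) = 0"
  proof -
    have "Q3 - Q2 = (Q3 - Q1) - (Q2 - Q1)" by simp
    hence "H (Q3 - Q2) = H (Q3 - Q1) - H (Q2 - Q1)" using Hlin by metis
    thus ?thesis using H21 H31 by simp
  qed
  from unimodal[OF t, of be] show False
  proof (elim disjE)
    assume "\<forall>t\<in>{t1..t2}. sin (Th t - be) \<ge> 0"
    thus False using pair_contra[OF t(2) t(1) _ _ dP(1) dP(2) _ far(1) dd(1) dd(2)] H21 t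
      unfolding H_def by auto
  next
    assume "\<forall>t\<in>{t1..t2}. sin (Th t - be) \<le> 0"
    thus False using pair_contra[OF t(2) t(1) _ _ dP(1) dP(2) _ far(1) dd(1) dd(2)] H21 t
      unfolding H_def by auto
  next
    assume "\<forall>t\<in>{t2..t3}. sin (Th t - be) \<ge> 0"
    thus False using pair_contra[OF t(3) _ t(4) _ dP(2) dP(3) _ far(2) dd(1) dd(2)] H32 t
      unfolding H_def by auto
  next
    assume "\<forall>t\<in>{t2..t3}. sin (Th t - be) \<le> 0"
    thus False using pair_contra[OF t(3) _ t(4) _ dP(2) dP(3) _ far(2) dd(1) dd(2)] H32 t
      unfolding H_def by auto
  qed
qed


lemma triple:
  assumes t: "a \<le> t1" "t1 \<le> t2" "t2 \<le> t3" "t3 \<le> b"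
    and Q: "Q1 \<in> lattice v0 v1 v2" "Q2 \<in> lattice v0 v1 v2" "Q3 \<in> lattice v0 v1 v2"
    and dP: "norm (g t1 - Q1) < \<delta>" "norm (g t2 - Q2) < \<delta>" "norm (g t3 - Q3) < \<delta>"
    and far: "norm (Q2 - Q1) \<ge> d" "norm (Q3 - Q2) \<ge> d"
    and dd: "d - 2 * \<delta> > 0" "(d - 2 * \<delta>)\<^sup>2 > 4 * R2 * \<delta>" "\<delta> > 0"
    and Ap: "lattice_area v1 v2 - 2 * sig b * \<delta> - 3 * \<delta>\<^sup>2 > 0"
  shows "sig t3 - sig t1 > 2 * (R1 * (lattice_area v1 v2 - 2 * sig b * \<delta> - 3 * \<delta>\<^sup>2)) powr (1/3)"
proof -
  define A' where "A' = lattice_area v1 v2 - 2 * sig b * \<delta> - 3 * \<delta>\<^sup>2"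
  define P1 where "P1 = g t1"
  define P2 where "P2 = g t2"
  define P3 where "P3 = g t3"
  have nd: "det2 (Q2 - Q1) (Q3 - Q1) \<noteq> 0" by (rule nondeg[OF t dP far dd])
  have dQ: "\<bar>det2 (Q2 - Q1) (Q3 - Q1)\<bar> \<ge> lattice_area v1 v2" by (rule lattice_det[OF Q nd])
  have pert: "\<bar>det2 (Q2 - Q1) (Q3 - Q1)\<bar> < \<bar>det2 (P2 - P1) (P3 - P1)\<bar>
     + \<delta> * (norm (P1 - P2) + norm (P2 - P3) + norm (P3 - P1)) + 3 * \<delta>\<^sup>2"
    using dP unfolding P1_def P2_def P3_def by (intro perturb) (auto simp: norm_minus_commute)
  have c12: "norm (P1 - P2) \<le> sig t2 - sig t1" unfolding P1_def P2_def
    using chord[of t1 t2] t by (simp add: norm_minus_commute)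
  have c23: "norm (P2 - P3) \<le> sig t3 - sig t2" unfolding P3_def P2_def
    using chord[of t2 t3] t by (simp add: norm_minus_commute)
  have c31: "norm (P3 - P1) \<le> sig t3 - sig t1" unfolding P1_def P3_def
    using chord[of t1 t3] t by simp
  have s1: "sig t1 \<ge> 0" using sig_mono[of a t1] t sig_a by auto
  have s3: "sig t3 \<le> sig b" using sig_mono[of t3 b] t by auto
  have "\<delta> * (norm (P1 - P2) + norm (P2 - P3) + norm (P3 - P1)) \<le> \<delta> * (2 * sig b)"
    using c12 c23 c31 s1 s3 dd(3) by (intro mult_left_mono) auto
  have detP: "det2 (P2 - P1) (P3 - P1) = (X t2 - X t1) * (Y t3 - Y t2) - (Y t2 - Y t1) * (X t3 - X t2)"
    unfolding P1_def P2_def P3_def X_def Y_def det2_def by (simp add: algebra_simps)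
  define p where "p = sig t2 - sig t1"
  define q where "q = sig t3 - sig t2"
  have pq: "p \<ge> 0" "q \<ge> 0" unfolding p_def q_def using sig_mono t by auto
  have up: "0 \<le> det2 (P2 - P1) (P3 - P1)" "det2 (P2 - P1) (P3 - P1) \<le> p * q * (p + q) / (2 * R1)"
    unfolding detP p_def q_def using area_upper[OF t] by (auto simp: algebra_simps)
  have "A' < det2 (P2 - P1) (P3 - P1)"
  proof -
    have "\<delta> * (2 * sig b) = 2 * sig b * \<delta>" by simp
    thus ?thesis using dQ pert \<open>\<delta> * _ \<le> \<delta> * (2 * sig b)\<close> up(1) unfolding A'_def by linarith
  qed
  also have "\<dots> \<le> p * q * (p + q) / (2 * R1)" by (rule up(2))
  also have "\<dots> \<le> (p + q) ^ 3 / (8 * R1)"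
  proof -
    have "(p + q)\<^sup>2 - 4 * (p * q) = (p - q)\<^sup>2" by (simp add: power2_eq_square algebra_simps)
    hence "4 * (p * q) \<le> (p + q)\<^sup>2" using zero_le_power2[of "p - q"] by linarith
    hence "4 * (p * q) * (p + q) \<le> (p + q)\<^sup>2 * (p + q)" using pq by (intro mult_right_mono) auto
    hence "4 * (p * q) * (p + q) / (8 * R1) \<le> (p + q)\<^sup>2 * (p + q) / (8 * R1)"
      using R by (intro divide_right_mono) auto
    moreover have "4 * (p * q) * (p + q) / (8 * R1) = p * q * (p + q) / (2 * R1)" by simp
    moreover have "(p + q)\<^sup>2 * (p + q) = (p + q) ^ 3" by (simp add: power2_eq_square power3_eq_cube)
    ultimately show ?thesis by simp
  qed
  finally have lt: "8 * (R1 * A') < (p + q) ^ 3" using R by (simp add: field_simps)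
  define c where "c = (R1 * A') powr (1/3)"
  have RA: "R1 * A' > 0" using R Ap unfolding A'_def by simp
  have c3: "c ^ 3 = R1 * A'" unfolding c_def by (rule cube_root[OF RA])
  have cpos: "c \<ge> 0" unfolding c_def by simp
  have "2 * c < p + q"
  proof (rule ccontr)
    assume "\<not> 2 * c < p + q"
    hence "(p + q) ^ 3 \<le> (2 * c) ^ 3" using pq by (intro power_mono) auto
    thus False using lt c3 by (simp add: power_mult_distrib)
  qed
  thus ?thesis unfolding c_def A'_def p_def q_def by simp
qed

end

lemma telescope: fixes m :: nat and f :: "nat \<Rightarrow> real"
  shows "(\<Sum>k<m. (f (k + 2) - f k)) = f (m + 1) + f m - f 1 - f 0"
  by (induction m) (auto simp: algebra_simps)

theorem theorem7p7:
  fixes g g1 g2 :: "real \<Rightarrow> real^2" and a b R1 R2 \<delta> :: real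
    and v0 v1 v2 :: "real^2"
  assumes curve: "C2_regular_curve g g1 g2 a b"
    and pos_curv: "\<forall>t\<in>{a..b}. curvature g1 g2 t > 0"
    and arc: "convex_arc g a b"
    and totcurv: "total_curvature g1 g2 a b \<le> pi"
    and R: "0 < R1" "R1 \<le> R2"
    and rho: "\<forall>t\<in>{a..b}. R1 \<le> 1 / curvature g1 g2 t \<and> 1 / curvature g1 g2 t \<le> R2"
    and indep: "\<not> dependent {v1, v2}" "v1 \<noteq> v2"
    and dpos: "\<delta> > 0"
    and d1: "\<delta> < (lattice_mindist (lattice v0 v1 v2))\<^sup>2 /
       (2 * (R2 + lattice_mindist (lattice v0 v1 v2) +
         sqrt ((R2 + lattice_mindist (lattice v0 v1 v2))\<^sup>2 - (lattice_mindist (lattice v0 v1 v2))\<^sup>2)))"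
    and d2: "lattice_area v1 v2 / 2 - arc_length g1 a b * \<delta> - 3/2 * \<delta>\<^sup>2 > 0"
  shows "real (card {Q \<in> lattice v0 v1 v2. infdist Q (g ` {a..b}) < \<delta>}) <
    2 + arc_length g1 a b /
      (R1 * (lattice_area v1 v2 - 2 * arc_length g1 a b * \<delta> - 3 * \<delta>\<^sup>2)) powr (1/3)"
proof -
  interpret ccurve g g1 g2 a b R1 R2
    by unfold_locales (use curve pos_curv totcurv R rho in auto)
  define L where "L = lattice v0 v1 v2"
  define d where "d = lattice_mindist L"
  define Sset where "Sset = {Q \<in> L. infdist Q (g ` {a..b}) < \<delta>}"
  define Len where "Len = arc_length g1 a b"
  define A' where "A' = lattice_area v1 v2 - 2 * Len * \<delta> - 3 * \<delta>\<^sup>2"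
  define c where "c = (R1 * A') powr (1/3)"
  have Len: "Len = sig b" unfolding Len_def by (rule arc_eq)
  have A'pos: "A' > 0" using d2 unfolding A'_def Len_def by simp
  have RA: "R1 * A' > 0" using R A'pos by simp
  have cpos: "c > 0" unfolding c_def using RA R A'pos by simp
  have abI: "a \<le> b" using ab by simp
  have sa: "sig a = 0" by (rule sig_a)
  have sig_range: "0 \<le> sig t \<and> sig t \<le> Len" if t: "t \<in> {a..b}" for t
  proof -
    have "sig a \<le> sig t" using t by (intro sig_mono) auto
    moreover have "sig t \<le> sig b" using t by (intro sig_mono) auto
    ultimately show ?thesis unfolding Len sa by simp
  qed
  have Lenpos: "Len > 0"
  proof -
    have inj: "inj_on g {a..b}" using arc unfolding convex_arc_def by simp
    have "g a \<noteq> g b"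
    proof
      assume "g a = g b"
      hence "a = b" using inj_onD[OF inj] ab by auto
      thus False using ab by simp
    qed
    hence "0 < norm (g b - g a)" by simp
    also have "\<dots> \<le> sig b - sig a" using chord[of a b] ab by simp
    finally show ?thesis unfolding Len sa by simp
  qed
  have v1nz: "v1 \<noteq> 0"
  proof
    assume "v1 = 0"
    hence "(0::real^2) \<in> {v1, v2}" by simp
    hence "dependent {v1, v2}" by (rule dependent_zero)
    thus False using indep(1) by simp
  qed
  have v0L: "v0 \<in> L"
  proof -
    have "v0 = v0 + of_int 0 *\<^sub>R v1 + of_int 0 *\<^sub>R v2" by simp
    thus ?thesis unfolding L_def lattice_def by blast
  qed
  have v01L: "v0 + v1 \<in> L"
  proof -
    have "v0 + v1 = v0 + of_int 1 *\<^sub>R v1 + of_int 0 *\<^sub>R v2" by simp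
    thus ?thesis unfolding L_def lattice_def by blast
  qed
  have d0: "d \<ge> 0" unfolding d_def using mindist_nonneg[OF v0L v01L] v1nz by simp
  have dd: "d - 2 * \<delta> > 0" "(d - 2 * \<delta>)\<^sup>2 > 4 * R2 * \<delta>"
  proof -
    have d1': "\<delta> < d\<^sup>2 / (2 * (R2 + d + sqrt ((R2 + d)\<^sup>2 - d\<^sup>2)))" using d1 unfolding d_def L_def .
    have "R2 > 0" using R by simp
    from d_cond[OF d0 this dpos d1'] show "d - 2 * \<delta> > 0" "(d - 2 * \<delta>)\<^sup>2 > 4 * R2 * \<delta>" by auto
  qed
  have goal_eq: "?thesis \<longleftrightarrow> real (card Sset) < 2 + Len / c"
    unfolding Sset_def L_def Len_def c_def A'_def by simp
  show ?thesis
  proof (cases "finite Sset")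
    case False
    hence "card Sset = 0" by simp
    moreover have "Len / c > 0" using Lenpos cpos by simp
    ultimately show ?thesis unfolding goal_eq by simp
  next
    case fin: True
    define n where "n = card Sset"
    have ne: "g ` {a..b} \<noteq> {}" using abI by auto
    have tau_ex: "\<exists>t. t \<in> {a..b} \<and> dist Q (g t) < \<delta>" if "Q \<in> Sset" for Q
    proof -
      have "infdist Q (g ` {a..b}) < \<delta>" using that unfolding Sset_def by simp
      then obtain y where "y \<in> g ` {a..b}" "dist Q y < \<delta>" by (rule infdist_lessE[OF ne])
      thus ?thesis by auto
    qed
    define tau where "tau = (\<lambda>Q. SOME t. t \<in> {a..b} \<and> dist Q (g t) < \<delta>)"
    have tau: "tau Q \<in> {a..b}" "norm (g (tau Q) - Q) < \<delta>" if "Q \<in> Sset" for Q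
    proof -
      have "tau Q \<in> {a..b} \<and> dist Q (g (tau Q)) < \<delta>" unfolding tau_def by (rule someI_ex[OF tau_ex[OF that]])
      thus "tau Q \<in> {a..b}" "norm (g (tau Q) - Q) < \<delta>" by (auto simp: dist_norm norm_minus_commute)
    qed
    have SL: "Sset \<subseteq> L" unfolding Sset_def by auto
    have far: "norm (Q - Q') \<ge> d" if "Q \<in> Sset" "Q' \<in> Sset" "Q \<noteq> Q'" for Q Q'
      unfolding d_def using mindist_le[of Q L Q'] that SL by auto
    have inj: "inj_on tau Sset"
    proof (rule inj_onI)
      fix Q Q' assume QQ: "Q \<in> Sset" "Q' \<in> Sset" "tau Q = tau Q'"
      show "Q = Q'"
      proof (rule ccontr)
        assume ne: "Q \<noteq> Q'"
        have "norm (Q - Q') \<le> norm (g (tau Q) - Q) + norm (g (tau Q) - Q')"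
          using norm_triangle_ineq4[of "g (tau Q) - Q'" "g (tau Q) - Q"] by (simp add: norm_minus_commute)
        also have "\<dots> < 2 * \<delta>" using tau(2)[OF QQ(1)] tau(2)[OF QQ(2)] QQ(3) by simp
        finally show False using far[OF QQ(1,2) ne] dd by simp
      qed
    qed
    show ?thesis
    proof (cases "n \<le> 2")
      case True
      have "real n \<le> 2" using True by simp
      also have "\<dots> < 2 + Len / c" using Lenpos cpos by simp
      finally show ?thesis unfolding goal_eq n_def .
    next
      case False
      hence n3: "n \<ge> 3" by simp
      define T where "T = tau ` Sset"
      have finT: "finite T" unfolding T_def using fin by simp
      have cardT: "card T = n" unfolding T_def n_def using card_image[OF inj] .
      obtain xs where xs: "sorted_wrt (<) xs" "set xs = T" "length xs = card T"
        using finite_set_strict_sorted[OF finT] by blast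
      define t where "t = (\<lambda>k. xs ! k)"
      define Qk where "Qk = (\<lambda>k. inv_into Sset tau (t k))"
      have tT: "t k \<in> T" if "k < n" for k using that xs cardT unfolding t_def by auto
      have QkS: "Qk k \<in> Sset" if "k < n" for k
        using tT[OF that] unfolding Qk_def T_def by (simp add: inv_into_into)
      have tauQ: "tau (Qk k) = t k" if "k < n" for k
        using tT[OF that] unfolding Qk_def T_def by (simp add: f_inv_into_f)
      have tab: "t k \<in> {a..b}" if "k < n" for k using tau(1)[OF QkS[OF that]] tauQ[OF that] by simp
      have tmono: "t i < t j" if "i < j" "j < n" for i j
        using sorted_wrt_nth_less[OF xs(1) that(1)] that xs cardT unfolding t_def by simp
      have dist: "norm (g (t k) - Qk k) < \<delta>" if "k < n" for k using tau(2)[OF QkS[OF that]] tauQ[OF that] by simp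
      have Qne: "Qk i \<noteq> Qk j" if "i < j" "j < n" for i j
        using tauQ[of i] tauQ[of j] tmono[OF that] that by auto
      have step: "sig (t (k + 2)) - sig (t k) > 2 * c" if "k + 2 < n" for k
      proof -
        have k: "k < n" "k + 1 < n" "k + 2 < n" using that by auto
        have "sig (t (k+2)) - sig (t k) > 2 * (R1 * (lattice_area v1 v2 - 2 * sig b * \<delta> - 3 * \<delta>\<^sup>2)) powr (1/3)"
        proof (rule triple)
          show "a \<le> t k" "t k \<le> t (k+1)" "t (k+1) \<le> t (k+2)" "t (k+2) \<le> b"
            using tab[OF k(1)] tab[OF k(3)] tmono[of k "k+1"] tmono[of "k+1" "k+2"] k by auto
          show "Qk k \<in> lattice v0 v1 v2" "Qk (k+1) \<in> lattice v0 v1 v2" "Qk (k+2) \<in> lattice v0 v1 v2"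
            using QkS k SL unfolding L_def by auto
          show "norm (g (t k) - Qk k) < \<delta>" "norm (g (t (k+1)) - Qk (k+1)) < \<delta>" "norm (g (t (k+2)) - Qk (k+2)) < \<delta>"
            using dist k by auto
          show "d \<le> norm (Qk (k+1) - Qk k)" using far[OF QkS[OF k(2)] QkS[OF k(1)]] Qne[of k "k+1"] k by auto
          show "d \<le> norm (Qk (k+2) - Qk (k+1))" using far[OF QkS[OF k(3)] QkS[OF k(2)]] Qne[of "k+1" "k+2"] k by auto
          show "d - 2 * \<delta> > 0" "(d - 2 * \<delta>)\<^sup>2 > 4 * R2 * \<delta>" "\<delta> > 0" using dd dpos by auto
          show "lattice_area v1 v2 - 2 * sig b * \<delta> - 3 * \<delta>\<^sup>2 > 0" using A'pos unfolding A'_def Len .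
        qed
        thus ?thesis unfolding c_def A'_def Len .
      qed
      define m where "m = n - 2"
      have m: "m > 0" "m + 2 = n" using n3 unfolding m_def by auto
      have "(\<Sum>k<m. 2 * c) < (\<Sum>k<m. sig (t (k + 2)) - sig (t k))"
        using m step by (intro sum_strict_mono) auto
      also have "\<dots> = sig (t (m + 1)) + sig (t m) - sig (t 1) - sig (t 0)" by (rule telescope)
      also have "\<dots> \<le> 2 * Len"
        using sig_range[OF tab[of "m+1"]] sig_range[OF tab[of m]] sig_range[OF tab[of 1]] sig_range[OF tab[of 0]] m
        by auto
      finally have "real m * (2 * c) < 2 * Len" by simp
      hence "real m * c < Len" by simp
      hence "real m < Len / c" using cpos by (simp add: field_simps)
      thus ?thesis unfolding goal_eq n_def[symmetric] using m by auto
    qed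
  qed
qed


end
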